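(* Let $\mathfrak{g}$ be a real nilpotent Lie algebra of dimension $2n$ with nilindex $m=\mathrm{nil}(\mathfrak{g})$, and suppose $\mathfrak{g}$ carries a (left-invariant) generalized complex structure of type $k>1$. Suppose there is an integer $j>0$ such that $\dim(V_{i+1}/V_i)=1$ for all $i$ with $j\le i\le m-1$. Then $$k\le \begin{cases} 2n-\mathrm{nil}(\mathfrak{g})+j-2 & \text{if } j>1,\\ 2n-\mathrm{nil}(\mathfrak{g}) & \text{if } j=1.\end{cases}$$
   Context: Lower central series: $\mathfrak{g}^0=\mathfrak{g}$, $\mathfrak{g}^i=[\mathfrak{g}^{i-1},\mathfrak{g}]$; the nilindex $m=\mathrm{nil}(\mathfrak{g})$ is the least $m$ with $\mathfrak{g}^m=0$. For $i\ge 0$, $V_i\subset\mathfrak{g}^*$ is the annihilator of $\mathfrak{g}^i$, so $V_0=0$ and $V_m=\mathfrak{g}^*$. The differential $d$ on $\Lambda\mathfrak{g}^*$ is the Chevalley–Eilenberg differential, e.g. $d\alpha(X,Y)=-\alpha([X,Y])$ for $\alpha\in\mathfrak{g}^*$. On $\mathfrak{g}\oplus\mathfrak{g}^*$ the Courant bracket is $[X+\xi,Y+\eta]_c=[X,Y]+I_X d\eta-I_Y d\xi$ (here $I$ is interior product; this is the Courant bracket for left-invariant objects), and the inner product is $\langle X+\xi,Y+\eta\rangle=\tfrac12(\xi(Y)+\eta(X))$. A generalized complex structure on $\mathfrak{g}$ is a linear map $\mathcal{J}$ of $\mathfrak{g}\oplus\mathfrak{g}^*$ with $\mathcal{J}^2=-\mathrm{Id}$,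 orthogonal for $\langle\,,\rangle$, whose $+i$-eigenspace $L\subset(\mathfrak{g}\oplus\mathfrak{g}^* )\otimes\mathbb{C}$ is closed under the (complexified) Courant bracket. Its type $k$ is the complex codimension in $\mathfrak{g}\otimes\mathbb{C}$ of the projection of $L$ onto $\mathfrak{g}\otimes\mathbb{C}$. *)

theory Defs
  imports "HOL-Analysis.Analysis"
begin

text \<open>A finite-dimensional real Lie algebra is modelled on a Euclidean space type 'a
  (only its real vector space structure is used; the inner product serves only to
  identify the dual space with 'a: a vector xi represents the functional Y |-> xi . Y).\<close>

definition lie_algebra :: "('a::euclidean_space \<Rightarrow> 'a \<Rightarrow> 'a) \<Rightarrow> bool" where
  "lie_algebra br \<longleftrightarrow> bilinear br \<and> (\<forall>x. br x x = 0) \<and>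
     (\<forall>x y z. br x (br y z) + br y (br z x) + br z (br x y) = 0)"

fun lcs :: "('a::euclidean_space \<Rightarrow> 'a \<Rightarrow> 'a) \<Rightarrow> nat \<Rightarrow> 'a set" where
  "lcs br 0 = UNIV"
| "lcs br (Suc i) = span {br x y | x y. x \<in> lcs br i}"

definition nilpotent_lie :: "('a::euclidean_space \<Rightarrow> 'a \<Rightarrow> 'a) \<Rightarrow> bool" where
  "nilpotent_lie br \<longleftrightarrow> (\<exists>m. lcs br m = {0})"

definition nilindex :: "('a::euclidean_space \<Rightarrow> 'a \<Rightarrow> 'a) \<Rightarrow> nat" where
  "nilindex br = (LEAST m. lcs br m = {0})"

text \<open>V_i = annihilator of g^i in g* (dual identified with 'a).\<close>
definition annV :: "('a::euclidean_space \<Rightarrow> 'a \<Rightarrow> 'a) \<Rightarrow> nat \<Rightarrow> 'a set" where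
  "annV br i = {xi. \<forall>x\<in>lcs br i. xi \<bullet> x = 0}"

text \<open>Elements of g + g* are pairs (X, xi). Interior product of the Chevalley-Eilenberg
  differential: (I_X d eta)(Y) = d eta (X,Y) = - eta([X,Y]), represented by the vector
  - adjoint (br X) eta.\<close>
definition courant :: "('a::euclidean_space \<Rightarrow> 'a \<Rightarrow> 'a) \<Rightarrow> 'a \<times> 'a \<Rightarrow> 'a \<times> 'a \<Rightarrow> 'a \<times> 'a" where
  "courant br u v = (br (fst u) (fst v),
      - adjoint (br (fst u)) (snd v) + adjoint (br (fst v)) (snd u))"

definition pairing :: "('a::euclidean_space) \<times> 'a \<Rightarrow> 'a \<times> 'a \<Rightarrow> real" where
  "pairing u v = (snd u \<bullet> fst v + snd v \<bullet> fst u) / 2"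

text \<open>Complexification: an element a + i b of (g + g*) (x) C is the pair (a, b).
  Complex-bilinear extension of the Courant bracket.\<close>
definition ccourant :: "('a::euclidean_space \<Rightarrow> 'a \<Rightarrow> 'a) \<Rightarrow>
    ('a \<times> 'a) \<times> ('a \<times> 'a) \<Rightarrow> ('a \<times> 'a) \<times> ('a \<times> 'a) \<Rightarrow> ('a \<times> 'a) \<times> ('a \<times> 'a)" where
  "ccourant br p q = (courant br (fst p) (fst q) - courant br (snd p) (snd q),
                      courant br (fst p) (snd q) + courant br (snd p) (fst q))"

text \<open>+i eigenspace of the complex-linear extension of J: {u - i J u}.\<close>
definition eigL :: "('a::euclidean_space \<times> 'a \<Rightarrow> 'a \<times> 'a) \<Rightarrow> (('a \<times> 'a) \<times> ('a \<times> 'a)) set" where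
  "eigL J = {(u, - J u) | u. True}"

definition gen_complex_structure ::
    "('a::euclidean_space \<Rightarrow> 'a \<Rightarrow> 'a) \<Rightarrow> ('a \<times> 'a \<Rightarrow> 'a \<times> 'a) \<Rightarrow> bool" where
  "gen_complex_structure br J \<longleftrightarrow> linear J \<and> (\<forall>u. J (J u) = - u) \<and>
     (\<forall>u v. pairing (J u) (J v) = pairing u v) \<and>
     (\<forall>p\<in>eigL J. \<forall>q\<in>eigL J. ccourant br p q \<in> eigL J)"

text \<open>Projection of L onto g (x) C (as a real subspace of g x g), and the type:
  complex codimension = DIM g - (real dimension of the projection) / 2.\<close>
definition projL :: "('a::euclidean_space \<times> 'a \<Rightarrow> 'a \<times> 'a) \<Rightarrow> ('a \<times> 'a) set" where
  "projL J = (\<lambda>p. (fst (fst p), fst (snd p))) ` eigL J"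

definition gc_type :: "('a::euclidean_space \<times> 'a \<Rightarrow> 'a \<times> 'a) \<Rightarrow> nat" where
  "gc_type J = DIM('a) - dim (projL J) div 2"

end

theory Submission
  imports Defs
begin



definition cbr :: "('a::euclidean_space \<Rightarrow> 'a \<Rightarrow> 'a) \<Rightarrow> 'a \<times> 'a \<Rightarrow> 'a \<times> 'a \<Rightarrow> 'a \<times> 'a" where
  "cbr br p q = (br (fst p) (fst q) - br (snd p) (snd q), br (fst p) (snd q) + br (snd p) (fst q))"

definition ii :: "'a::real_vector \<times> 'a \<Rightarrow> 'a \<times> 'a" where "ii p = (- snd p, fst p)"
definition cj :: "'a::real_vector \<times> 'a \<Rightarrow> 'a \<times> 'a" where "cj p = (fst p, - snd p)"
definition msum :: "('b::real_vector) set \<Rightarrow> 'b set \<Rightarrow> 'b set" where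
  "msum A B = {x + y | x y. x \<in> A \<and> y \<in> B}"

lemma ii_ii[simp]: "ii (ii p) = - p" by (simp add: ii_def prod_eq_iff)
lemma cj_cj[simp]: "cj (cj p) = p" by (simp add: cj_def)
lemma linear_ii: "linear ii"
  by (rule linearI) (auto simp: ii_def algebra_simps)
lemma linear_cj: "linear cj"
  by (rule linearI) (auto simp: cj_def algebra_simps)

lemma subspace_lcs: "subspace (lcs br i)"
  by (cases i) (auto simp: subspace_span)

lemma lcs_Suc_sub: "lcs br (Suc i) \<subseteq> lcs br i"
proof (induction i)
  case 0 then show ?case by simp
next
  case (Suc i)
  have "{br x y | x y. x \<in> lcs br (Suc i)} \<subseteq> {br x y | x y. x \<in> lcs br i}"
    using Suc by blast
  then show ?case by (simp only: lcs.simps) (rule span_mono)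
qed

lemma lcs_antimono: "i \<le> i' \<Longrightarrow> lcs br i' \<subseteq> lcs br i"
  by (induction rule: dec_induct) (use lcs_Suc_sub in blast)+

lemma lcs_br1: "x \<in> lcs br i \<Longrightarrow> br x y \<in> lcs br (Suc i)"
  by (auto intro!: span_base)

locale liealg =
  fixes br :: "'a::euclidean_space \<Rightarrow> 'a \<Rightarrow> 'a"
  assumes bil: "bilinear br" and alt: "\<And>x. br x x = 0"
begin

lemma anti: "br x y = - br y x"
proof -
  have "br (x+y) (x+y) = 0" by (rule alt)
  then have "br x y + br y x = 0"
    using alt[of x] alt[of y] by (simp add: bilinear_ladd[OF bil] bilinear_radd[OF bil] add.commute)
  then show ?thesis by (simp add: eq_neg_iff_add_eq_0)
qed

lemma lcs_br2: "x \<in> lcs br i \<Longrightarrow> br y x \<in> lcs br (Suc i)"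
  using lcs_br1[of x br i y] anti[of y x] subspace_lcs[of br "Suc i"]
  by (metis subspace_neg)

lemmas bl = bilinear_ladd[OF bil] bilinear_radd[OF bil] bilinear_lmul[OF bil] bilinear_rmul[OF bil]
   bilinear_lneg[OF bil] bilinear_rneg[OF bil] bilinear_lsub[OF bil] bilinear_rsub[OF bil]
   bilinear_lzero[OF bil] bilinear_rzero[OF bil]

lemma cbr_ladd: "cbr br (p + q) r = cbr br p r + cbr br q r"
  by (simp add: cbr_def bl prod_eq_iff algebra_simps)
lemma cbr_radd: "cbr br r (p + q) = cbr br r p + cbr br r q"
  by (simp add: cbr_def bl prod_eq_iff algebra_simps)
lemma cbr_lsub: "cbr br (p - q) r = cbr br p r - cbr br q r"
  by (simp add: cbr_def bl prod_eq_iff algebra_simps)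
lemma cbr_rsub: "cbr br r (p - q) = cbr br r p - cbr br r q"
  by (simp add: cbr_def bl prod_eq_iff algebra_simps)
lemma cbr_lmul: "cbr br (c *\<^sub>R p) r = c *\<^sub>R cbr br p r"
  by (simp add: cbr_def bl prod_eq_iff algebra_simps)
lemma cbr_rmul: "cbr br r (c *\<^sub>R p) = c *\<^sub>R cbr br r p"
  by (simp add: cbr_def bl prod_eq_iff algebra_simps)
lemma cbr_rii: "cbr br p (ii q) = ii (cbr br p q)"
  by (simp add: cbr_def ii_def bl prod_eq_iff algebra_simps)
lemma cbr_lii: "cbr br (ii p) q = ii (cbr br p q)"
  by (simp add: cbr_def ii_def bl prod_eq_iff algebra_simps)
lemma cbr_cj: "cbr br (cj p) (cj q) = cj (cbr br p q)"
  by (simp add: cbr_def cj_def bl prod_eq_iff algebra_simps)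
lemma cbr_real: "cbr br (a, 0) (b, 0) = (br a b, 0)"
  by (simp add: cbr_def bl)

lemma cbr_G1: "p \<in> lcs br i \<times> lcs br i \<Longrightarrow> cbr br p q \<in> lcs br (Suc i) \<times> lcs br (Suc i)"
  using subspace_lcs[of br "Suc i"]
  by (auto simp: cbr_def simp del: lcs.simps intro!: subspace_add subspace_diff lcs_br1)
lemma cbr_G2: "p \<in> lcs br i \<times> lcs br i \<Longrightarrow> cbr br q p \<in> lcs br (Suc i) \<times> lcs br (Suc i)"
  using subspace_lcs[of br "Suc i"]
  by (auto simp: cbr_def simp del: lcs.simps intro!: subspace_add subspace_diff lcs_br2)

end

lemma G_ii: "p \<in> S \<times> S \<Longrightarrow> subspace S \<Longrightarrow> ii p \<in> S \<times> S"
  by (auto simp: ii_def subspace_neg)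
lemma G_cj: "p \<in> S \<times> S \<Longrightarrow> subspace S \<Longrightarrow> cj p \<in> S \<times> S"
  by (auto simp: cj_def subspace_neg)




locale gcs = liealg br for br :: "'a::euclidean_space \<Rightarrow> 'a \<Rightarrow> 'a" +
  fixes P :: "('a \<times> 'a) set" and j m :: nat
  assumes lcs_m: "lcs br m = {0}"
  and layer: "\<And>i. j \<le> i \<Longrightarrow> i < m \<Longrightarrow> dim (lcs br i) = dim (lcs br (Suc i)) + 1"
  and jpos: "0 < j"
  and Psub: "subspace P" and Pii: "\<And>p. p \<in> P \<Longrightarrow> ii p \<in> P"
  and Pbr: "\<And>p q. p \<in> P \<Longrightarrow> q \<in> P \<Longrightarrow> cbr br p q \<in> P"
  and Pspan: "\<And>x. \<exists>p q. p \<in> P \<and> q \<in> P \<and> x = p + cj q"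
begin

declare lcs.simps(2)[simp del]

lemma lcs_ge_m: "m \<le> i \<Longrightarrow> lcs br i = {0}"
  using lcs_antimono[of m i br] lcs_m subspace_0[OF subspace_lcs[of br i]] by blast

lemma subG: "subspace (lcs br i \<times> lcs br i)"
  by (simp add: subspace_Times subspace_lcs)

lemma no_collapse: assumes "j \<le> i" "i < m" shows "\<not> (lcs br i \<subseteq> lcs br (Suc i))"
proof
  assume "lcs br i \<subseteq> lcs br (Suc i)"
  then have "dim (lcs br i) \<le> dim (lcs br (Suc i))" by (rule dim_subset)
  with layer[OF assms] show False by simp
qed

lemma layer_real:
  assumes "j \<le> i" "i < m"
  obtains w0 where "w0 \<in> lcs br i" "\<And>x. x \<in> lcs br i \<Longrightarrow> \<exists>c. x - c *\<^sub>R w0 \<in> lcs br (Suc i)"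
proof -
  obtain w0 where w0: "w0 \<in> lcs br i" "w0 \<notin> lcs br (Suc i)"
    using no_collapse[OF assms] by blast
  define T where "T = span (insert w0 (lcs br (Suc i)))"
  have sp: "span (lcs br (Suc i)) = lcs br (Suc i)"
    using subspace_lcs span_eq_iff by blast
  have "T \<subseteq> lcs br i"
    unfolding T_def using w0 lcs_Suc_sub[of br i] subspace_lcs[of br i]
    by (intro span_minimal) auto
  moreover have "dim T = dim (lcs br (Suc i)) + 1"
  proof -
    have "w0 \<notin> span (lcs br (Suc i))" using w0(2) sp by metis
    then show ?thesis unfolding T_def dim_span dim_insert by simp
  qed
  ultimately have "T = lcs br i"
    using layer[OF assms] subspace_lcs[of br i]
    by (intro subspace_dim_equal) (auto simp: T_def)
  have "\<exists>c. x - c *\<^sub>R w0 \<in> lcs br (Suc i)" if x: "x \<in> lcs br i" for x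
  proof -
    have "x \<in> span (insert w0 (lcs br (Suc i)))" using x \<open>T = lcs br i\<close> unfolding T_def by simp
    then obtain c where "x - c *\<^sub>R w0 \<in> span (lcs br (Suc i))" unfolding span_breakdown_eq by blast
    then show ?thesis unfolding sp by blast
  qed
  with w0 that show ?thesis by blast
qed

lemma zero_P: "0 \<in> P" using Psub subspace_0 by blast

lemma prop_layer:
  "j \<le> i \<Longrightarrow> w \<in> P \<Longrightarrow> w \<in> lcs br i \<times> lcs br i \<Longrightarrow> w \<notin> lcs br (Suc i) \<times> lcs br (Suc i)
   \<Longrightarrow> lcs br i \<times> lcs br i \<subseteq> P"
proof (induction "m - i" arbitrary: i w rule: less_induct)
  case less
  show ?case
  proof (cases "i < m")
    case False
    then have "lcs br i = {0}" "lcs br (Suc i) = {0}" using lcs_ge_m by auto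
    then show ?thesis using less.prems by auto
  next
    case True
    obtain w0 where w0: "w0 \<in> lcs br i"
      and dec: "\<And>x. x \<in> lcs br i \<Longrightarrow> \<exists>c. x - c *\<^sub>R w0 \<in> lcs br (Suc i)"
      using layer_real[OF less.prems(1) True] by blast
    obtain w1 w2 where w: "w = (w1, w2)" by (cases w)
    obtain a where a: "w1 - a *\<^sub>R w0 \<in> lcs br (Suc i)" using dec less.prems(3) w by auto
    obtain b where b: "w2 - b *\<^sub>R w0 \<in> lcs br (Suc i)" using dec less.prems(3) w by auto
    define u1 where "u1 = w1 - a *\<^sub>R w0"
    define u2 where "u2 = w2 - b *\<^sub>R w0"
    define N where "N = a*a + b*b"
    define U where "U = (a *\<^sub>R u1 + b *\<^sub>R u2, a *\<^sub>R u2 - b *\<^sub>R u1)"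
    have SS: "subspace (lcs br (Suc i))" by (rule subspace_lcs)
    have U: "U \<in> lcs br (Suc i) \<times> lcs br (Suc i)"
      using a b SS unfolding U_def u1_def[symmetric] u2_def[symmetric]
      by (simp add: subspace_add[OF SS] subspace_diff[OF SS] subspace_scale[OF SS])
    have "(a, b) \<noteq> (0, 0)"
    proof
      assume "(a, b) = (0, 0)"
      then have "w \<in> lcs br (Suc i) \<times> lcs br (Suc i)" using a b w by auto
      then show False using less.prems(4) by blast
    qed
    then have "a \<noteq> 0 \<or> b \<noteq> 0" by auto
    then have Npos: "N > 0" unfolding N_def
      by (simp add: sum_squares_gt_zero_iff)
    have key: "(w0, 0) = (1 / N) *\<^sub>R (a *\<^sub>R w - b *\<^sub>R ii w - U)"
    proof -
      have e1: "w1 = u1 + a *\<^sub>R w0" "w2 = u2 + b *\<^sub>R w0" by (simp_all add: u1_def u2_def)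
      have "a *\<^sub>R w - b *\<^sub>R ii w - U = (N *\<^sub>R w0, 0)"
        unfolding w U_def ii_def N_def e1
        by (simp add: algebra_simps)
      then show ?thesis using Npos by simp
    qed
    have repr: "\<And>x. x \<in> lcs br i \<times> lcs br i \<Longrightarrow>
        \<exists>c e y. y \<in> lcs br (Suc i) \<times> lcs br (Suc i) \<and> x = c *\<^sub>R (w0, 0) + e *\<^sub>R ii (w0, 0) + y"
    proof -
      fix x assume "x \<in> lcs br i \<times> lcs br i"
      then obtain x1 x2 where x: "x = (x1, x2)" "x1 \<in> lcs br i" "x2 \<in> lcs br i" by auto
      obtain c where c: "x1 - c *\<^sub>R w0 \<in> lcs br (Suc i)" using dec x by blast
      obtain e where e: "x2 - e *\<^sub>R w0 \<in> lcs br (Suc i)" using dec x by blast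
      show "\<exists>c e y. y \<in> lcs br (Suc i) \<times> lcs br (Suc i) \<and> x = c *\<^sub>R (w0, 0) + e *\<^sub>R ii (w0, 0) + y"
        by (rule exI[of _ c], rule exI[of _ e], rule exI[of _ "(x1 - c *\<^sub>R w0, x2 - e *\<^sub>R w0)"])
           (simp add: ii_def c e x)
    qed
    have conclude: "lcs br i \<times> lcs br i \<subseteq> P" if GS: "lcs br (Suc i) \<times> lcs br (Suc i) \<subseteq> P"
    proof -
      have UP: "U \<in> P" using U GS by blast
      have "a *\<^sub>R w - b *\<^sub>R ii w - U \<in> P"
        by (intro subspace_diff[OF Psub] subspace_scale[OF Psub] less.prems(2) Pii UP)
      then have E0: "(w0, 0) \<in> P" unfolding key by (rule subspace_scale[OF Psub])
      show ?thesis
      proof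
        fix x assume "x \<in> lcs br i \<times> lcs br i"
        then obtain c e y where y: "y \<in> lcs br (Suc i) \<times> lcs br (Suc i)"
          and x: "x = c *\<^sub>R (w0, 0) + e *\<^sub>R ii (w0, 0) + y" using repr by blast
        have "y \<in> P" using y GS by blast
        then show "x \<in> P" unfolding x
          by (intro subspace_add[OF Psub] subspace_scale[OF Psub] Pii E0)
      qed
    qed
    show ?thesis
    proof (cases "Suc i < m")
      case False
      then have "lcs br (Suc i) = {0}" using lcs_ge_m by auto
      then have "lcs br (Suc i) \<times> lcs br (Suc i) \<subseteq> P" using zero_P by (simp add: zero_prod_def)
      then show ?thesis by (rule conclude)
    next
      case SI: True
      have "\<exists>p\<in>P. cbr br p w \<notin> lcs br (Suc (Suc i)) \<times> lcs br (Suc (Suc i))"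
      proof (rule ccontr)
        assume "\<not> ?thesis"
        then have H: "\<And>p. p \<in> P \<Longrightarrow> cbr br p w \<in> lcs br (Suc (Suc i)) \<times> lcs br (Suc (Suc i))" by blast
        have H2: "cbr br p (w0, 0) \<in> lcs br (Suc (Suc i)) \<times> lcs br (Suc (Suc i))" if "p \<in> P" for p
        proof -
          have eq: "cbr br p (w0, 0) = (1 / N) *\<^sub>R (a *\<^sub>R cbr br p w - b *\<^sub>R ii (cbr br p w) - cbr br p U)"
            unfolding key by (simp add: cbr_rmul cbr_radd cbr_rsub cbr_rii)
          have S: "subspace (lcs br (Suc (Suc i)) \<times> lcs br (Suc (Suc i)))" by (rule subG)
          show ?thesis unfolding eq
            by (intro subspace_scale[OF S] subspace_diff[OF S] H[OF that] G_ii[OF H[OF that] subspace_lcs]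
                cbr_G2[OF U])
        qed
        have H3: "br x w0 \<in> lcs br (Suc (Suc i))" for x
        proof -
          obtain p q where pq: "p \<in> P" "q \<in> P" "(x, 0) = p + cj q" using Pspan by blast
          have cjq: "cbr br (cj q) (w0, 0) = cj (cbr br q (w0, 0))"
            using cbr_cj[of q "(w0, 0)"] by (simp add: cj_def)
          have "cbr br (x, 0) (w0, 0) \<in> lcs br (Suc (Suc i)) \<times> lcs br (Suc (Suc i))"
            unfolding pq(3) cbr_ladd cjq
            by (intro subspace_add[OF subG] H2[OF pq(1)] G_cj[OF H2[OF pq(2)] subspace_lcs])
          then show ?thesis by (simp add: cbr_real)
        qed
        have "lcs br (Suc i) \<subseteq> lcs br (Suc (Suc i))"
        proof -
          have "{br x y | x y. x \<in> lcs br i} \<subseteq> lcs br (Suc (Suc i))"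
          proof clarify
            fix x y assume x: "x \<in> lcs br i"
            obtain c where c: "x - c *\<^sub>R w0 \<in> lcs br (Suc i)" using dec x by blast
            have eq: "br x y = br (x - c *\<^sub>R w0) y - c *\<^sub>R br y w0"
              by (simp add: bl anti[of w0 y])
            have S2: "subspace (lcs br (Suc (Suc i)))" by (rule subspace_lcs)
            show "br x y \<in> lcs br (Suc (Suc i))"
              unfolding eq by (intro subspace_diff[OF S2] subspace_scale[OF S2] H3 lcs_br1[OF c])
          qed
          then show ?thesis
            by (simp only: lcs.simps(2)[of br i]) (rule span_minimal[OF _ subspace_lcs])
        qed
        moreover have "j \<le> Suc i" using less.prems(1) by simp
        ultimately show False using no_collapse[of "Suc i"] SI by blast
      qed
      then obtain p where p: "p \<in> P" "cbr br p w \<notin> lcs br (Suc (Suc i)) \<times> lcs br (Suc (Suc i))" by blast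
      have "lcs br (Suc i) \<times> lcs br (Suc i) \<subseteq> P"
      proof (rule less.hyps)
        show "m - Suc i < m - i" using True by simp
        show "j \<le> Suc i" using less.prems(1) by simp
        show "cbr br p w \<in> P" by (rule Pbr[OF p(1) less.prems(2)])
        show "cbr br p w \<in> lcs br (Suc i) \<times> lcs br (Suc i)" by (rule cbr_G2[OF less.prems(3)])
        show "cbr br p w \<notin> lcs br (Suc (Suc i)) \<times> lcs br (Suc (Suc i))" by (rule p(2))
      qed
      then show ?thesis by (rule conclude)
    qed
  qed
qed

end



context gcs begin

lemma Pcap: assumes "j \<le> m" shows "P \<inter> (lcs br j \<times> lcs br j) \<subseteq> cj ` P"
proof -
  define i0 where "i0 = (LEAST i. j \<le> i \<and> lcs br i \<times> lcs br i \<subseteq> P)"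
  have ex: "j \<le> m \<and> lcs br m \<times> lcs br m \<subseteq> P" using assms lcs_m zero_P by (simp add: zero_prod_def)
  have i0: "j \<le> i0" "lcs br i0 \<times> lcs br i0 \<subseteq> P"
    using LeastI[of "\<lambda>i. j \<le> i \<and> lcs br i \<times> lcs br i \<subseteq> P", OF ex] unfolding i0_def by auto
  have mn: "\<And>i. j \<le> i \<Longrightarrow> i < i0 \<Longrightarrow> \<not> (lcs br i \<times> lcs br i \<subseteq> P)"
    unfolding i0_def using not_less_Least by blast
  have step: "P \<inter> (lcs br j \<times> lcs br j) \<subseteq> lcs br (j + t) \<times> lcs br (j + t)" if "j + t \<le> i0" for t
    using that
  proof (induction t)
    case 0 then show ?case by auto
  next
    case (Suc t)
    show ?case
    proof
      fix w assume w: "w \<in> P \<inter> (lcs br j \<times> lcs br j)"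
      have w1: "w \<in> lcs br (j + t) \<times> lcs br (j + t)" using Suc w by auto
      show "w \<in> lcs br (j + Suc t) \<times> lcs br (j + Suc t)"
      proof (rule ccontr)
        assume "w \<notin> lcs br (j + Suc t) \<times> lcs br (j + Suc t)"
        then have "lcs br (j + t) \<times> lcs br (j + t) \<subseteq> P"
          using prop_layer[of "j + t" w] w w1 by auto
        then show False using mn[of "j + t"] Suc.prems by auto
      qed
    qed
  qed
  show ?thesis
  proof
    fix w assume w: "w \<in> P \<inter> (lcs br j \<times> lcs br j)"
    have "w \<in> lcs br i0 \<times> lcs br i0" using step[of "i0 - j"] i0(1) w by auto
    then have "cj w \<in> P" using G_cj[OF _ subspace_lcs] i0(2) by blast
    then show "w \<in> cj ` P" by (metis cj_cj image_eqI)
  qed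
qed

lemma keyL: assumes "lcs br (j - 1) \<times> lcs br (j - 1) \<subseteq> msum P (lcs br j \<times> lcs br j)"
  shows "lcs br j \<times> lcs br j \<subseteq> P"
proof (rule ccontr)
  assume nP: "\<not> ?thesis"
  have jm: "j < m"
  proof (rule ccontr)
    assume "\<not> j < m"
    then have "lcs br j = {0}" using lcs_ge_m by auto
    then show False using nP zero_P by (simp add: zero_prod_def)
  qed
  have PG: "P \<inter> (lcs br j \<times> lcs br j) \<subseteq> lcs br (Suc j) \<times> lcs br (Suc j)"
  proof
    fix w assume w: "w \<in> P \<inter> (lcs br j \<times> lcs br j)"
    show "w \<in> lcs br (Suc j) \<times> lcs br (Suc j)"
      using prop_layer[of j w] w nP by auto
  qed
  have S1: "subspace (lcs br (Suc j) \<times> lcs br (Suc j))" by (rule subG)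
  have jj: "Suc (j - 1) = j" using jpos by simp
  have gen: "br u x \<in> lcs br (Suc j)" if u: "u \<in> lcs br (j - 1)" for u x
  proof -
    have "(u, 0) \<in> lcs br (j - 1) \<times> lcs br (j - 1)" using u subspace_0[OF subspace_lcs] by auto
    then obtain a y where ay: "a \<in> P" "y \<in> lcs br j \<times> lcs br j" "(u, 0) = a + y"
      using assms unfolding msum_def by blast
    obtain p q where pq: "p \<in> P" "q \<in> P" "(x, 0) = p + cj q" using Pspan by blast
    have yj1: "y \<in> lcs br (j - 1) \<times> lcs br (j - 1)"
      using ay(2) lcs_Suc_sub[of br "j - 1"] jj by auto
    have aG: "a \<in> lcs br (j - 1) \<times> lcs br (j - 1)"
    proof -
      have "a = (u, 0) - y" using ay(3) by (simp add: algebra_simps)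
      then show ?thesis using \<open>(u, 0) \<in> _\<close> yj1 subspace_diff[OF subG] by metis
    qed
    have u2: "(u, 0) = cj a + cj y" using ay(3) by (simp add: cj_def prod_eq_iff neg_eq_iff_add_eq_0)
    have t1: "cbr br a p \<in> lcs br (Suc j) \<times> lcs br (Suc j)"
      using PG Pbr[OF ay(1) pq(1)] cbr_G1[OF aG, of p] jj by auto
    have t2: "cbr br y p \<in> lcs br (Suc j) \<times> lcs br (Suc j)" by (rule cbr_G1[OF ay(2)])
    have t3': "cbr br a q \<in> lcs br (Suc j) \<times> lcs br (Suc j)"
      using PG Pbr[OF ay(1) pq(2)] cbr_G1[OF aG, of q] jj by auto
    have t3: "cj (cbr br a q) \<in> lcs br (Suc j) \<times> lcs br (Suc j)"
      by (rule G_cj[OF t3' subspace_lcs])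
    have t4: "cbr br (cj y) (cj q) \<in> lcs br (Suc j) \<times> lcs br (Suc j)"
      by (rule cbr_G1[OF G_cj[OF ay(2) subspace_lcs]])
    have "cbr br (u, 0) (x, 0) = cbr br (u, 0) p + cbr br (u, 0) (cj q)"
      unfolding pq(3) by (rule cbr_radd)
    also have "\<dots> = (cbr br a p + cbr br y p) + (cj (cbr br a q) + cbr br (cj y) (cj q))"
      by (subst (2) u2, subst (1) ay(3)) (simp add: cbr_ladd cbr_cj)
    finally have "cbr br (u, 0) (x, 0) \<in> lcs br (Suc j) \<times> lcs br (Suc j)"
      by (metis t1 t2 t3 t4 subspace_add[OF S1])
    then show ?thesis by (simp add: cbr_real)
  qed
  have "lcs br j \<subseteq> lcs br (Suc j)"
  proof -
    have "{br x y | x y. x \<in> lcs br (j - 1)} \<subseteq> lcs br (Suc j)" using gen by blast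
    then have "span {br x y | x y. x \<in> lcs br (j - 1)} \<subseteq> lcs br (Suc j)"
      by (rule span_minimal[OF _ subspace_lcs])
    then show ?thesis using lcs.simps(2)[of br "j - 1"] jj by simp
  qed
  then show False using no_collapse[OF order_refl jm] by blast
qed

end



lemma ii_inner: "(x::'a::euclidean_space \<times> 'a) \<bullet> ii y = - (ii x \<bullet> y)"
  by (cases x, cases y) (simp add: ii_def inner_commute)

lemma ii_self: "(x::'a::euclidean_space \<times> 'a) \<bullet> ii x = 0"
  using ii_inner[of x x] by (cases x) (simp add: ii_def inner_commute)

lemma even_dim:
  fixes Q :: "('a::euclidean_space \<times> 'a) set"
  assumes "subspace Q" "\<And>p. p \<in> Q \<Longrightarrow> ii p \<in> Q"
  shows "even (dim Q)"
  using assms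
proof (induction "dim Q" arbitrary: Q rule: less_induct)
  case less
  show ?case
  proof (cases "Q \<subseteq> {0}")
    case True then have "dim Q = 0" by simp
    then show ?thesis by (simp del: dim_eq_0)
  next
    case False
    then obtain p where p: "p \<in> Q" "p \<noteq> 0" by blast
    define A where "A = span {p, ii p}"
    define Q' where "Q' = {y \<in> Q. \<forall>x\<in>A. orthogonal x y}"
    have iipQ: "ii p \<in> Q" using less.prems p by blast
    have AQ: "A \<subseteq> Q" unfolding A_def using p iipQ less.prems(1) by (intro span_minimal) auto
    have dimQ: "dim Q' + dim A = dim Q"
      unfolding Q'_def A_def using AQ less.prems(1)
      by (intro dim_subspace_orthogonal_to_vectors) (auto simp: A_def)
    have pp: "p \<bullet> p \<noteq> 0" using p by simp
    have iip0: "ii p \<noteq> 0" using p by (cases p) (auto simp: ii_def zero_prod_def)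
    have ne: "p \<noteq> ii p" using ii_self[of p] pp by metis
    have nsp: "p \<notin> span {ii p}"
    proof
      assume "p \<in> span {ii p}"
      then obtain k where "p = k *\<^sub>R ii p" by (auto simp: span_singleton)
      then have "p \<bullet> p = k * (p \<bullet> ii p)" by (metis inner_scaleR_right)
      then show False using pp ii_self[of p] by simp
    qed
    have ind: "independent {p, ii p}"
      using nsp iip0 ne by (simp add: independent_insert)
    have dimA: "dim A = 2"
      unfolding A_def using dim_span_eq_card_independent[OF ind] ne by simp
    have Aii: "ii x \<in> A" if "x \<in> A" for x
    proof -
      have sv: "subspace {x. ii x \<in> A}"
        unfolding subspace_def
        by (auto simp: linear_add[OF linear_ii] linear_scale[OF linear_ii] linear_0[OF linear_ii]
            A_def span_zero span_add span_scale)
      have sv': "subspace (Collect (\<lambda>x. ii x \<in> span {p, ii p}))" using sv unfolding A_def by simp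
      have base: "ii y \<in> span {p, ii p}" if "y \<in> {p, ii p}" for y
      proof -
        have "p \<in> span {p, ii p}" "ii p \<in> span {p, ii p}" by (auto intro: span_base)
        then show ?thesis using that span_neg[of p "{p, ii p}"] by auto
      qed
      have "ii x \<in> span {p, ii p}"
        using span_induct[of x "{p, ii p}" "\<lambda>x. ii x \<in> span {p, ii p}", OF _ sv' base] that
        unfolding A_def by blast
      then show ?thesis unfolding A_def .
    qed
    have subQ': "subspace Q'"
    proof -
      have "Q' = Q \<inter> {y. \<forall>x\<in>A. orthogonal x y}" unfolding Q'_def by blast
      then show ?thesis using subspace_inter less.prems(1) subspace_orthogonal_to_vectors by metis
    qed
    have iiQ': "ii y \<in> Q'" if "y \<in> Q'" for y
    proof -
      have "ii y \<in> Q" using that less.prems unfolding Q'_def by blast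
      moreover have "orthogonal x (ii y)" if "x \<in> A" for x
      proof -
        have "orthogonal (ii x) y" using \<open>y \<in> Q'\<close> Aii[OF that] unfolding Q'_def by blast
        then show ?thesis unfolding orthogonal_def using ii_inner[of x y] by simp
      qed
      ultimately show ?thesis unfolding Q'_def by blast
    qed
    have "even (dim Q')"
      using less.hyps[OF _ subQ' iiQ'] dimQ dimA by simp
    then show ?thesis using dimQ dimA by (metis even_add even_numeral)
  qed
qed




context gcs begin

lemma stab: assumes "lcs br (Suc i) = lcs br i" shows "lcs br i = {0}"
proof -
  have "lcs br (i + t) = lcs br i" for t
  proof (induction t)
    case 0 then show ?case by simp
  next
    case (Suc t)
    have "lcs br (i + Suc t) = span {br x y | x y. x \<in> lcs br (i + t)}"
      by (simp add: lcs.simps(2))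
    also have "\<dots> = lcs br (Suc i)" using Suc by (simp add: lcs.simps(2))
    finally show ?case using assms by simp
  qed
  then have "lcs br i \<subseteq> lcs br m" using lcs_antimono[of m "i + m" br] by (metis le_add2)
  then show ?thesis using lcs_m subspace_0[OF subspace_lcs[of br i]] by blast
qed

lemma lcs1_small: assumes "2 \<le> DIM('a)" shows "dim (lcs br 1) + 2 \<le> DIM('a)"
proof (rule ccontr)
  assume "\<not> ?thesis"
  then have big: "DIM('a) \<le> dim (lcs br 1) + 1" by simp
  have L0: "lcs br 0 = UNIV" by simp
  have "lcs br 1 \<subseteq> lcs br 2"
  proof (cases "lcs br 1 = UNIV")
    case True
    then have "lcs br (Suc 0) = lcs br 0" by simp
    then have "lcs br 0 = {0}" by (rule stab)
    then have "(UNIV :: 'a set) \<subseteq> {0}" by simp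
    then have "dim (UNIV :: 'a set) = 0" by (simp only: dim_eq_0)
    then show ?thesis using assms by simp
  next
    case False
    then obtain x where x: "x \<notin> lcs br 1" by blast
    have sp: "span (lcs br 1) = lcs br 1" using subspace_lcs span_eq_iff by blast
    have xs: "x \<notin> span (lcs br 1)" using x sp by metis
    have "dim (span (insert x (lcs br 1))) = dim (lcs br 1) + 1"
      unfolding dim_span dim_insert using xs by simp
    then have "span (insert x (lcs br 1)) = UNIV"
      using big by (intro subspace_dim_equal) (auto simp: subspace_span)
    have dec: "\<exists>c. y - c *\<^sub>R x \<in> lcs br 1" for y
    proof -
      have "y \<in> span (insert x (lcs br 1))" using \<open>span (insert x (lcs br 1)) = UNIV\<close> by simp
      then obtain c where "y - c *\<^sub>R x \<in> span (lcs br 1)" unfolding span_breakdown_eq by blast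
      then show ?thesis unfolding sp by blast
    qed
    have S2: "subspace (lcs br 2)" by (rule subspace_lcs)
    have "{br a b | a b. a \<in> lcs br 0} \<subseteq> lcs br 2"
    proof clarify
      fix a b :: 'a
      obtain c where c: "a - c *\<^sub>R x \<in> lcs br 1" using dec by blast
      obtain e where e: "b - e *\<^sub>R x \<in> lcs br 1" using dec by blast
      define a' where "a' = a - c *\<^sub>R x"
      define b' where "b' = b - e *\<^sub>R x"
      have "a = c *\<^sub>R x + a'" "b = e *\<^sub>R x + b'" by (simp_all add: a'_def b'_def)
      then have eq: "br a b = c *\<^sub>R br x b' + e *\<^sub>R br a' x + br a' b'"
        by (simp add: bl alt algebra_simps)
      have "br x b' \<in> lcs br 2" using lcs_br2[of b' 1 x] e b'_def by (simp add: numeral_2_eq_2)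
      moreover have "br a' x \<in> lcs br 2" using lcs_br1[of a' br 1 x] c a'_def by (simp add: numeral_2_eq_2)
      moreover have "br a' b' \<in> lcs br 2" using lcs_br1[of a' br 1 b'] c a'_def by (simp add: numeral_2_eq_2)
      ultimately show "br a b \<in> lcs br 2" unfolding eq
        by (intro subspace_add[OF S2] subspace_scale[OF S2])
    qed
    then show ?thesis
      using span_minimal[OF _ S2] lcs.simps(2)[of br 0] by (simp add: numeral_2_eq_2)
  qed
  then have "lcs br (Suc 1) = lcs br 1" using lcs_Suc_sub[of br 1] by (simp add: numeral_2_eq_2)
  then have "lcs br 1 = {0}" by (rule stab)
  then show False using big assms by simp
qed

lemma dim_lcs: "j \<le> i \<Longrightarrow> i \<le> m \<Longrightarrow> dim (lcs br i) = m - i"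
proof (induction "m - i" arbitrary: i)
  case 0 then have "i = m" by simp
  then show ?case using lcs_m by simp
next
  case (Suc t)
  then have "i < m" by simp
  then have "dim (lcs br (Suc i)) = m - Suc i" using Suc by simp
  then show ?case using layer[OF Suc.prems(1) \<open>i < m\<close>] \<open>i < m\<close> by simp
qed

lemma codim2:
  fixes Q :: "('a \<times> 'a) set"
  assumes Qs: "subspace Q" and Qii: "\<And>p. p \<in> Q \<Longrightarrow> ii p \<in> Q"
    and Qbr: "\<And>p q. p \<in> Q \<Longrightarrow> q \<in> Q \<Longrightarrow> cbr br p q \<in> Q"
    and big: "DIM('a \<times> 'a) \<le> dim Q + 2"
  shows "lcs br 1 \<times> lcs br 1 \<subseteq> Q"
proof -
  have Qbr_all: "cbr br y z \<in> Q" for y z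
  proof (cases "Q = UNIV")
    case True then show ?thesis by simp
  next
    case False
    define i1 where "i1 = (LEAST i. lcs br i \<times> lcs br i \<subseteq> Q)"
    have ex: "lcs br m \<times> lcs br m \<subseteq> Q" using lcs_m subspace_0[OF Qs] by (simp add: zero_prod_def)
    have i1: "lcs br i1 \<times> lcs br i1 \<subseteq> Q" using LeastI[of "\<lambda>i. lcs br i \<times> lcs br i \<subseteq> Q" m, OF ex] unfolding i1_def .
    have i1nz: "i1 \<noteq> 0" using i1 False by auto
    define i where "i = i1 - 1"
    have Si: "Suc i = i1" using i1nz i_def by simp
    have nGi: "\<not> (lcs br i \<times> lcs br i \<subseteq> Q)"
      using not_less_Least[of i "\<lambda>i. lcs br i \<times> lcs br i \<subseteq> Q"] i1_def Si by auto
    then obtain x where x: "x \<in> lcs br i \<times> lcs br i" "x \<notin> Q" by blast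
    have spQ: "span Q = Q" using Qs span_eq_iff by blast
    have xs: "x \<notin> span Q" using x spQ by metis
    have iixs: "ii x \<notin> span (insert x Q)"
    proof
      assume "ii x \<in> span (insert x Q)"
      then obtain c where c: "ii x - c *\<^sub>R x \<in> Q" unfolding span_breakdown_eq spQ by blast
      define q where "q = ii x - c *\<^sub>R x"
      have "ii q + c *\<^sub>R q \<in> Q" using c Qii q_def by (intro subspace_add[OF Qs] subspace_scale[OF Qs]) auto
      moreover have "ii q + c *\<^sub>R q = - ((1 + c * c) *\<^sub>R x)"
        unfolding q_def by (simp add: linear_diff[OF linear_ii] linear_scale[OF linear_ii] algebra_simps)
      ultimately have "(1 + c * c) *\<^sub>R x \<in> Q" using subspace_neg[OF Qs] by fastforce
      then have "(1 / (1 + c * c)) *\<^sub>R ((1 + c * c) *\<^sub>R x) \<in> Q" by (rule subspace_scale[OF Qs])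
      moreover have "1 + c * c \<noteq> 0" by (metis add_pos_nonneg zero_le_square zero_less_one less_irrefl)
      ultimately show False using x(2) by simp
    qed
    have "dim (span (insert (ii x) (insert x Q))) = dim Q + 2"
      unfolding dim_span dim_insert using xs iixs by simp
    then have full: "span (insert (ii x) (insert x Q)) = UNIV"
      using big by (intro subspace_dim_equal) (auto simp: subspace_span)
    have dec: "\<exists>X q. X \<in> lcs br i \<times> lcs br i \<and> q \<in> Q \<and> y = X + q" for y
    proof -
      have "y \<in> span (insert (ii x) (insert x Q))" using full by simp
      then obtain c1 where "y - c1 *\<^sub>R ii x \<in> span (insert x Q)" unfolding span_breakdown_eq by blast
      then obtain c2 where c2: "y - c1 *\<^sub>R ii x - c2 *\<^sub>R x \<in> Q" unfolding span_breakdown_eq spQ by blast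
      have "c1 *\<^sub>R ii x + c2 *\<^sub>R x \<in> lcs br i \<times> lcs br i"
        using x(1) G_ii[OF x(1) subspace_lcs] by (intro subspace_add[OF subG] subspace_scale[OF subG])
      then show ?thesis using c2 by (metis add.commute diff_add_cancel diff_diff_eq)
    qed
    obtain Y q where Y: "Y \<in> lcs br i \<times> lcs br i" "q \<in> Q" "y = Y + q" using dec by blast
    obtain Z q' where Z: "Z \<in> lcs br i \<times> lcs br i" "q' \<in> Q" "z = Z + q'" using dec by blast
    have GQ: "lcs br (Suc i) \<times> lcs br (Suc i) \<subseteq> Q" using i1 Si by simp
    have "cbr br y z = cbr br Y z + cbr br q Z + cbr br q q'"
      unfolding Y(3) Z(3) by (simp add: cbr_ladd cbr_radd)
    moreover have "cbr br Y z \<in> Q" using cbr_G1[OF Y(1)] GQ by blast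
    moreover have "cbr br q Z \<in> Q" using cbr_G2[OF Z(1)] GQ by blast
    moreover have "cbr br q q' \<in> Q" using Qbr Y(2) Z(2) by blast
    ultimately show ?thesis by (metis subspace_add[OF Qs])
  qed
  have sv: "subspace (Collect (\<lambda>u. (u, 0) \<in> Q))"
    unfolding subspace_def using subspace_0[OF Qs] subspace_add[OF Qs] subspace_scale[OF Qs]
    by (auto simp: zero_prod_def) (metis add_0 add_Pair, metis scaleR_Pair scaleR_zero_right)
  have real: "(u, 0) \<in> Q" if "u \<in> lcs br 1" for u
  proof -
    have "u \<in> span {br a b | a b. a \<in> lcs br 0}" using that by (simp add: lcs.simps(2))
    then show ?thesis
    proof (rule span_induct[where P="\<lambda>u. (u, 0) \<in> Q", OF _ sv])
      fix v assume "v \<in> {br a b | a b. a \<in> lcs br 0}"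
      then obtain a b where "v = br a b" by blast
      then show "(v, 0) \<in> Q" using Qbr_all[of "(a, 0)" "(b, 0)"] by (simp add: cbr_real)
    qed
  qed
  show ?thesis
  proof clarify
    fix u v assume uv: "u \<in> lcs br 1" "v \<in> lcs br 1"
    have "(u, v) = (u, 0) + ii (v, 0)" by (simp add: ii_def)
    then show "(u, v) \<in> Q" using real[OF uv(1)] Qii[OF real[OF uv(2)]] subspace_add[OF Qs] by metis
  qed
qed

end



lemma sum_mem: "x \<in> A \<Longrightarrow> y \<in> B \<Longrightarrow> z = x + y \<Longrightarrow> z \<in> {x + y |x y. x \<in> A \<and> y \<in> B}"
  by blast

context gcs begin

lemma dims_basic:
  assumes n: "DIM('a) = 2 * n"
  shows "4 * n + dim (P \<inter> cj ` P) = 2 * dim P"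
proof -
  have cjs: "subspace (cj ` P)" by (rule linear_subspace_image[OF linear_cj Psub])
  have injcj: "inj_on cj X" for X by (metis cj_cj inj_on_inverseI)
  have dcj: "dim (cj ` P) = dim P" by (rule dim_image_eq[OF linear_cj injcj])
  have U: "{x + y |x y. x \<in> P \<and> y \<in> cj ` P} = UNIV"
  proof -
    have "x \<in> {x + y |x y. x \<in> P \<and> y \<in> cj ` P}" for x
      using Pspan[of x] by blast
    then show ?thesis by blast
  qed
  have "dim {x + y |x y. x \<in> P \<and> y \<in> cj ` P} + dim (P \<inter> cj ` P) = dim P + dim (cj ` P)"
    by (rule dim_sums_Int[OF Psub cjs])
  then show ?thesis unfolding U dcj using n by simp
qed

lemma main_bound:
  assumes n: "DIM('a) = 2 * n" and n2: "2 \<le> n"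
  shows "(1 < j \<longrightarrow> 2 * (int m - int j + 2) \<le> int (dim P)) \<and> (j = 1 \<longrightarrow> 2 * int m \<le> int (dim P))"
proof -
  define R where "R = dim P"
  define I where "I = dim (P \<inter> cj ` P)"
  have RI: "4 * n + I = 2 * R" using dims_basic[OF n] unfolding R_def I_def .
  have evR: "even R" unfolding R_def by (rule even_dim[OF Psub Pii])
  have DIMp: "DIM('a \<times> 'a) = 4 * n" using n by simp
  show ?thesis
  proof (cases "m \<le> j")
    case True
    have "2 * n \<le> R" using RI by linarith
    then show ?thesis using True n2 unfolding R_def by auto
  next
    case False
    then have jm: "j < m" by simp
    have mj: "int (m - j) = int m - int j" using jm by simp
    have dj: "dim (lcs br j) = m - j" using dim_lcs[of j] jm by simp
    have dGj: "dim (lcs br j \<times> lcs br j) = 2 * (m - j)"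
      using dim_Times[OF subspace_lcs subspace_lcs, of br j br j] dj by simp
    have D2: "2 \<le> DIM('a)" using n n2 by simp
    have l1: "dim (lcs br 1) + 2 \<le> 2 * n"
    proof -
      have "dim (lcs br 1) + 2 \<le> DIM('a)" by (rule lcs1_small[OF D2])
      then show ?thesis unfolding n .
    qed
    show ?thesis
    proof (cases "lcs br j \<times> lcs br j \<subseteq> P")
      case A: True
      have "lcs br j \<times> lcs br j \<subseteq> P \<inter> cj ` P"
      proof
        fix x assume x: "x \<in> lcs br j \<times> lcs br j"
        have cx: "cj x \<in> lcs br j \<times> lcs br j" by (rule G_cj[OF x subspace_lcs])
        have "cj x \<in> P" by (rule subsetD[OF A cx])
        then have x1: "x \<in> cj ` P" by (rule image_eqI[rotated]) simp
        have x2: "x \<in> P" by (rule subsetD[OF A x])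
        show "x \<in> P \<inter> cj ` P" using x1 x2 by (rule IntI[rotated])
      qed
      then have "dim (lcs br j \<times> lcs br j) \<le> dim (P \<inter> cj ` P)" by (rule dim_subset)
      then have "2 * (m - j) \<le> I" unfolding I_def dGj .
      then have Rb: "2 * n + (m - j) \<le> R" using RI by simp
      show ?thesis
      proof (intro conjI impI)
        assume "j = 1"
        then have "m - 1 + 2 \<le> 2 * n" using l1 dj by simp
        then have h: "2 * int (m - j) + 2 \<le> int (dim P)" using Rb \<open>j = 1\<close> unfolding R_def by simp
        then have "2 * (int m - int j) + 2 \<le> int (dim P)" unfolding mj .
        then show "2 * int m \<le> int (dim P)" using \<open>j = 1\<close> by (simp add: algebra_simps)
      next
        assume j1: "1 < j"
        have "lcs br j \<subseteq> lcs br 2" using lcs_antimono[of 2 j br] j1 by simp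
        have ne: "lcs br j \<noteq> {0}"
        proof
          assume "lcs br j = {0}"
          then have "dim (lcs br j) = 0" by simp
          with dj jm show False by simp
        qed
        have "lcs br 2 \<noteq> lcs br 1"
        proof
          assume "lcs br 2 = lcs br 1"
          then have "lcs br (Suc 1) = lcs br 1" by (simp add: numeral_2_eq_2)
          then have "lcs br 1 = {0}" by (rule stab)
          then show False using ne lcs_antimono[of 1 j br] j1 subspace_0[OF subspace_lcs[of br j]] by auto
        qed
        then have ps: "lcs br 2 \<subset> lcs br 1" using lcs_Suc_sub[of br 1] by (auto simp: numeral_2_eq_2)
        have sp2: "span (lcs br 2) = lcs br 2" using span_eq_iff[of "lcs br 2"] subspace_lcs[of br 2] by blast
        have sp1: "span (lcs br 1) = lcs br 1" using span_eq_iff[of "lcs br 1"] subspace_lcs[of br 1] by blast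
        have "span (lcs br 2) \<subset> span (lcs br 1)" unfolding sp1 sp2 by (rule ps)
        then have "dim (lcs br 2) < dim (lcs br 1)" by (rule dim_psubset)
        moreover have "dim (lcs br j) \<le> dim (lcs br 2)" using \<open>lcs br j \<subseteq> lcs br 2\<close> by (rule dim_subset)
        ultimately have "m - j + 3 \<le> 2 * n" using l1 dj by simp
        then have "2 * (m - j) + 3 \<le> R" using Rb by simp
        then have "2 * (m - j) + 4 \<le> R" using evR by presburger
        then have h: "2 * int (m - j) + 4 \<le> int (dim P)" unfolding R_def by simp
        then have "2 * (int m - int j) + 4 \<le> int (dim P)" unfolding mj .
        then show "2 * (int m - int j + 2) \<le> int (dim P)" by (simp add: algebra_simps)
      qed
    next
      case B: False
      define Q where "Q = {x + y |x y. x \<in> P \<and> y \<in> lcs br j \<times> lcs br j}"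
      have Qs: "subspace Q" unfolding Q_def by (rule subspace_sums[OF Psub subG])
      have Qii: "ii q \<in> Q" if hq: "q \<in> Q" for q
      proof -
        obtain x y where xy: "x \<in> P" "y \<in> lcs br j \<times> lcs br j" "q = x + y" using hq Q_def by blast
        have "ii q = ii x + ii y" using xy(3) by (simp add: linear_add[OF linear_ii])
        then show ?thesis unfolding Q_def by (rule sum_mem[OF Pii[OF xy(1)] G_ii[OF xy(2) subspace_lcs]])
      qed
      have Qbr: "cbr br q q' \<in> Q" if hq: "q \<in> Q" "q' \<in> Q" for q q'
      proof -
        obtain x y where xy: "x \<in> P" "y \<in> lcs br j \<times> lcs br j" "q = x + y" using hq(1) Q_def by blast
        obtain x' y' where xy': "x' \<in> P" "y' \<in> lcs br j \<times> lcs br j" "q' = x' + y'" using hq(2) Q_def by blast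
        have S: "lcs br (Suc j) \<times> lcs br (Suc j) \<subseteq> lcs br j \<times> lcs br j"
          using lcs_Suc_sub[of br j] by auto
        have "cbr br q q' = cbr br x x' + (cbr br x y' + cbr br y x' + cbr br y y')"
          unfolding xy(3) xy'(3) by (simp add: cbr_ladd cbr_radd algebra_simps)
        moreover have "cbr br x y' + cbr br y x' + cbr br y y' \<in> lcs br j \<times> lcs br j"
          using cbr_G2[OF xy'(2), of x] cbr_G1[OF xy(2), of x'] cbr_G1[OF xy(2), of y'] S
          by (intro subspace_add[OF subG]) auto
        ultimately show ?thesis unfolding Q_def by (intro sum_mem[OF Pbr[OF xy(1) xy'(1)]])
      qed
      have "dim Q + dim (P \<inter> (lcs br j \<times> lcs br j)) = R + 2 * (m - j)"
        unfolding Q_def R_def using dim_sums_Int[OF Psub subG] dGj by simp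
      moreover have "dim (P \<inter> (lcs br j \<times> lcs br j)) \<le> I"
        unfolding I_def using Pcap jm by (intro dim_subset) auto
      ultimately have QR: "4 * n + 2 * (m - j) \<le> R + dim Q" using RI by linarith
      have evQ: "even (dim Q)" by (rule even_dim[OF Qs Qii])
      have nfull: "\<not> (lcs br (j - 1) \<times> lcs br (j - 1) \<subseteq> Q)"
        using keyL B unfolding Q_def msum_def by blast
      have QU: "dim Q < 4 * n"
      proof (rule ccontr)
        assume "\<not> ?thesis"
        then have "dim (UNIV :: ('a \<times> 'a) set) \<le> dim Q" using DIMp by simp
        then have "Q = UNIV" using subspace_dim_equal[OF Qs subspace_UNIV] by blast
        then show False using nfull by blast
      qed
      show ?thesis
      proof (intro conjI impI)
        assume "j = 1"
        have "dim Q + 2 \<le> 4 * n" using QU evQ by presburger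
        then have h: "2 * int (m - j) + 2 \<le> int (dim P)" using QR unfolding R_def by simp
        then have "2 * (int m - int j) + 2 \<le> int (dim P)" unfolding mj .
        then show "2 * int m \<le> int (dim P)" using \<open>j = 1\<close> by (simp add: algebra_simps)
      next
        assume j1: "1 < j"
        have "\<not> (4 * n \<le> dim Q + 2)"
        proof
          assume "4 * n \<le> dim Q + 2"
          then have "lcs br 1 \<times> lcs br 1 \<subseteq> Q" using codim2[OF Qs Qii Qbr] DIMp by simp
          moreover have "lcs br (j - 1) \<subseteq> lcs br 1" using lcs_antimono[of 1 "j - 1" br] j1 by simp
          ultimately show False using nfull by blast
        qed
        then have "dim Q + 4 \<le> 4 * n" using evQ by presburger
        then have h: "2 * int (m - j) + 4 \<le> int (dim P)" using QR unfolding R_def by simp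
        then have "2 * (int m - int j) + 4 \<le> int (dim P)" unfolding mj .
        then show "2 * (int m - int j + 2) \<le> int (dim P)" by (simp add: algebra_simps)
      qed
    qed
  qed
qed

end

lemma annV_dim:
  fixes br :: "'a::euclidean_space \<Rightarrow> 'a \<Rightarrow> 'a"
  shows "dim (annV br i) + dim (lcs br i) = DIM('a)"
proof -
  have "annV br i = {y \<in> UNIV. \<forall>x\<in>lcs br i. orthogonal x y}"
    unfolding annV_def orthogonal_def by (auto simp: inner_commute)
  then show ?thesis
    using dim_subspace_orthogonal_to_vectors[of "lcs br i" "UNIV :: 'a set"] subspace_lcs[of br i] by simp
qed

lemma projL_eq: "projL J = range (\<lambda>u. (fst u, - fst (J u)))"
proof -
  have "eigL J = range (\<lambda>u. (u, - J u))" unfolding eigL_def by auto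
  then show ?thesis unfolding projL_def by (simp add: image_image)
qed

theorem theorem2:
  fixes br :: "'a::euclidean_space \<Rightarrow> 'a \<Rightarrow> 'a"
    and J :: "'a \<times> 'a \<Rightarrow> 'a \<times> 'a"
    and n k j :: nat
  assumes "lie_algebra br"
    and "nilpotent_lie br"
    and "DIM('a) = 2 * n"
    and "gen_complex_structure br J"
    and "k = gc_type J"
    and "k > 1"
    and "j > 0"
    and "\<forall>i. j \<le> i \<and> i \<le> nilindex br - 1 \<longrightarrow>
              dim (annV br (i + 1)) - dim (annV br i) = 1"
  shows "(j > 1 \<longrightarrow> int k \<le> 2 * int n - int (nilindex br) + int j - 2) \<and>
         (j = 1 \<longrightarrow> int k \<le> 2 * int n - int (nilindex br))"
proof -
  note A = assms
  define m where "m = nilindex br"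
  have la: "liealg br" using A(1) unfolding lie_algebra_def by unfold_locales auto
  have lm: "lcs br m = {0}"
    using A(2) unfolding nilpotent_lie_def m_def nilindex_def by (rule LeastI_ex)
  have layer: "dim (lcs br i) = dim (lcs br (Suc i)) + 1" if "j \<le> i" "i < m" for i
  proof -
    have h: "dim (annV br (i + 1)) - dim (annV br i) = 1" using A(8) that m_def by auto
    have "dim (annV br (Suc i)) + dim (lcs br (Suc i)) = DIM('a)" by (rule annV_dim)
    moreover have "dim (annV br i) + dim (lcs br i) = DIM('a)" by (rule annV_dim)
    ultimately show ?thesis using h by simp
  qed
  define f where "f = (\<lambda>u. (fst u, - fst (J u)))"
  have linJ: "linear J" using A(4) unfolding gen_complex_structure_def by blast
  have JJ: "\<And>u. J (J u) = - u" using A(4) unfolding gen_complex_structure_def by blast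
  have clos: "\<And>p q. p \<in> eigL J \<Longrightarrow> q \<in> eigL J \<Longrightarrow> ccourant br p q \<in> eigL J"
    using A(4) unfolding gen_complex_structure_def by blast
  have linf: "linear f"
    unfolding f_def by (rule linearI) (auto simp: linear_add[OF linJ] linear_scale[OF linJ])
  define P where "P = range f"
  have PprojL: "projL J = P" unfolding projL_eq P_def f_def ..
  have Psub: "subspace P" unfolding P_def by (rule linear_subspace_image[OF linf subspace_UNIV])
  have Pii: "ii p \<in> P" if hp: "p \<in> P" for p
  proof -
    obtain u where u: "p = f u" using hp P_def by blast
    have "ii p = f (J u)" unfolding u f_def ii_def by (simp add: JJ)
    then show ?thesis unfolding P_def by (metis rangeI)
  qed
  have Pbr: "cbr br p q \<in> P" if hpq: "p \<in> P" "q \<in> P" for p q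
  proof -
    obtain u where u: "p = f u" using hpq(1) P_def by blast
    obtain v where v: "q = f v" using hpq(2) P_def by blast
    have "ccourant br (u, - J u) (v, - J v) \<in> eigL J"
      using clos unfolding eigL_def by blast
    then obtain w where w: "ccourant br (u, - J u) (v, - J v) = (w, - J w)"
      unfolding eigL_def by blast
    have "f w = cbr br p q"
    proof -
      have "fst (fst (ccourant br (u, - J u) (v, - J v))) = fst w" using w by simp
      moreover have "fst (snd (ccourant br (u, - J u) (v, - J v))) = - fst (J w)" using w by simp
      ultimately show ?thesis
        unfolding u v f_def cbr_def by (simp add: ccourant_def courant_def)
    qed
    then show ?thesis unfolding P_def by (metis rangeI)
  qed
  have Pspan: "\<exists>p q. p \<in> P \<and> q \<in> P \<and> x = p + cj q" for x
  proof -
    obtain a b where x: "x = (a, b)" by (cases x)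
    define pa where "pa = f (a, 0)"
    define pb where "pb = f (b, 0)"
    have pa: "pa \<in> P" "pb \<in> P" unfolding pa_def pb_def P_def by auto
    have p1: "(1/2) *\<^sub>R pa + (1/2) *\<^sub>R ii pb \<in> P"
      using pa Pii by (intro subspace_add[OF Psub] subspace_scale[OF Psub]) auto
    have p2: "(1/2) *\<^sub>R pa - (1/2) *\<^sub>R ii pb \<in> P"
      using pa Pii by (intro subspace_diff[OF Psub] subspace_scale[OF Psub]) auto
    have "x = ((1/2) *\<^sub>R pa + (1/2) *\<^sub>R ii pb) + cj ((1/2) *\<^sub>R pa - (1/2) *\<^sub>R ii pb)"
    proof -
      have half: "(1/2) *\<^sub>R v + (1/2) *\<^sub>R v = v" for v :: 'a
        by (simp only: scaleR_add_left[symmetric]) simp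
      show ?thesis
        unfolding x pa_def pb_def f_def ii_def cj_def by (simp add: prod_eq_iff algebra_simps half)
    qed
    then show ?thesis using p1 p2 by blast
  qed
  interpret G: gcs br P j m
    using la lm layer A(7) Psub Pii Pbr Pspan by (unfold_locales) (auto simp: liealg_def)
  have R4: "4 * n + dim (P \<inter> cj ` P) = 2 * dim P" by (rule G.dims_basic[OF A(3)])
  have kdef: "k = 2 * n - dim P div 2" using A(5) A(3) PprojL unfolding gc_type_def by simp
  have Rle: "dim P \<le> 4 * n"
  proof -
    have "dim P \<le> dim (UNIV :: ('a \<times> 'a) set)" by (rule dim_subset) simp
    then show ?thesis using A(3) by simp
  qed
  have "2 * n \<le> dim P" using R4 by linarith
  then have "k \<le> n" using kdef by simp
  then have n2: "2 \<le> n" using A(6) by simp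
  have MB: "(1 < j \<longrightarrow> 2 * (int m - int j + 2) \<le> int (dim P)) \<and> (j = 1 \<longrightarrow> 2 * int m \<le> int (dim P))"
    by (rule G.main_bound[OF A(3) n2])
  have kint: "int k = 2 * int n - int (dim P div 2)" using kdef Rle by simp
  have evP: "even (dim P)" by (rule even_dim[OF Psub Pii])
  then have "2 * (dim P div 2) = dim P" by (rule even_two_times_div_two)
  then have dv: "int (dim P) = 2 * int (dim P div 2)" by linarith
  define D where "D = int (dim P div 2)"
  define R0 where "R0 = int (dim P)"
  have kD: "int k = 2 * int n - D" using kint unfolding D_def .
  have RD: "R0 = 2 * D" using dv unfolding D_def R0_def .
  show ?thesis unfolding m_def[symmetric]
  proof (intro conjI impI)
    assume "1 < j"
    then have "2 * (int m - int j + 2) \<le> R0" using MB unfolding R0_def by blast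
    then show "int k \<le> 2 * int n - int m + int j - 2" using kD RD by presburger
  next
    assume "j = 1"
    then have "2 * int m \<le> R0" using MB unfolding R0_def by blast
    then show "int k \<le> 2 * int n - int m" using kD RD by presburger
  qed
qed

end
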